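(* Fix an integer $D\ge 21$. For a positive integer $n$, let $k=k(n)=\left\lceil \frac{3n\ln D}{D}\right\rceil$. Then the proportion of configurations $F\in\mathcal{F}_D(n)$ for which the multigraph $\pi(F)$ has an induced matching of size $k$ tends to $0$ as $n\to\infty$.
   Context: Let $n,D$ be positive integers and let $V_n=\{v_1,\dots,v_{nD}\}$ and $W_n=\{w_1,\dots,w_{nD}\}$ be disjoint sets. A configuration (of order $n$ and degree $D$) is a perfect matching between $V_n$ and $W_n$ (each edge has one end in $V_n$ and one in $W_n$); $\mathcal{F}_D(n)$ is the set of all $(Dn)!$ configurations. For $F\in\mathcal{F}_D(n)$, $\pi(F)$ is the $D$-regular bipartite multigraph with parts $X=\{x_1,\dots,x_n\}$ and $Y=\{y_1,\dots,y_n\}$ obtained by identifying, for each $j\in[n]$, the points $v_{D(j-1)+1},\dots,v_{Dj}$ into the vertex $x_j$ and the points $w_{D(j-1)+1},\dots,w_{Dj}$ into the vertex $y_j$; each pair of $F$ becomes an edge (parallel edges allowed). An induced matching of size $k$ in $\pi(F)$ is a set of $k$ pairwise vertex-disjoint edges such that the sub-multigraph of $\pi(F)$ induced on their $2k$ endpoints consists exactly of these $k$ edges (each of multiplicity one). $\ln$ is the natural logarithm. *)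

theory Defs
  imports "HOL-Analysis.Analysis" "HOL-Combinatorics.Permutations"
begin

text \<open>Points v_1..v_{nD} and w_1..w_{nD} are indexed by 0..nD-1. A configuration
  (perfect matching between V_n and W_n) is a bijection sigma of {..<n*D}:
  point v_i is paired with w_{sigma i}.
  Point i belongs to vertex x_{i div D} (resp. y_{i div D}).\<close>

definition configs :: "nat \<Rightarrow> nat \<Rightarrow> (nat \<Rightarrow> nat) set" where
  "configs D n = {\<sigma>. \<sigma> permutes {..<n*D}}"

text \<open>The edges of pi(F) are the pairs of F, indexed by their V-point i < nD;
  edge i joins x_{i div D} and y_{sigma i div D}. An induced matching of size k is a set S
  of k edges that are pairwise vertex-disjoint and such that every edge of pi(F) with both
  endpoints among the endpoints of S belongs to S (so the induced sub-multigraph consists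
  exactly of the edges of S, each with multiplicity one).\<close>

definition induced_matching :: "nat \<Rightarrow> nat \<Rightarrow> (nat \<Rightarrow> nat) \<Rightarrow> nat set \<Rightarrow> bool" where
  "induced_matching D n \<sigma> S \<longleftrightarrow>
     S \<subseteq> {..<n*D} \<and>
     inj_on (\<lambda>i. i div D) S \<and> inj_on (\<lambda>i. \<sigma> i div D) S \<and>
     (\<forall>j<n*D. j div D \<in> (\<lambda>i. i div D) ` S \<and> \<sigma> j div D \<in> (\<lambda>i. \<sigma> i div D) ` S \<longrightarrow> j \<in> S)"

definition has_induced_matching :: "nat \<Rightarrow> nat \<Rightarrow> (nat \<Rightarrow> nat) \<Rightarrow> nat \<Rightarrow> bool" where
  "has_induced_matching D n \<sigma> k \<longleftrightarrow> (\<exists>S. induced_matching D n \<sigma> S \<and> card S = k)"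

end

theory Submission
  imports Defs
begin


lemma exists_perm_map:
  assumes "finite U" "P1 \<subseteq> U" "P2 \<subseteq> U" "card P1 = card P2"
  shows "\<exists>\<rho>. \<rho> permutes U \<and> \<rho> ` P2 = P1"
proof -
  have fP1: "finite P1" "finite P2" using assms finite_subset by auto
  obtain f where f: "bij_betw f P2 P1" using finite_same_card_bij[of P2 P1] fP1 assms by auto
  have "card (U - P2) = card (U - P1)" using assms fP1 by (simp add: card_Diff_subset)
  then obtain g where g: "bij_betw g (U - P2) (U - P1)"
    using finite_same_card_bij[of "U - P2" "U - P1"] assms by auto
  define \<rho> where "\<rho> x = (if x \<in> P2 then f x else if x \<in> U then g x else x)" for x
  have b1: "bij_betw \<rho> P2 P1" using f by (rule bij_betw_cong[THEN iffD1, rotated]) (simp add: \<rho>_def)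
  have b2: "bij_betw \<rho> (U - P2) (U - P1)" using g by (rule bij_betw_cong[THEN iffD1, rotated]) (simp add: \<rho>_def)
  have "bij_betw \<rho> (P2 \<union> (U - P2)) (P1 \<union> (U - P1))"
    by (rule bij_betw_combine[OF b1 b2]) auto
  moreover have "P2 \<union> (U - P2) = U" "P1 \<union> (U - P1) = U" using assms by auto
  ultimately have "bij_betw \<rho> U U" by simp
  then have "\<rho> permutes U" by (rule bij_imp_permutes) (use assms in \<open>auto simp: \<rho>_def\<close>)
  moreover have "\<rho> ` P2 = P1" using b1 by (simp add: bij_betw_def)
  ultimately show ?thesis by blast
qed

lemma perm_count_le:
  assumes "finite U" "P1 \<subseteq> U" "P2 \<subseteq> U" "card P1 = card P2"
  shows "card {\<sigma>. \<sigma> permutes U \<and> \<sigma> ` P1 \<subseteq> Q} \<le> card {\<sigma>. \<sigma> permutes U \<and> \<sigma> ` P2 \<subseteq> Q}"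
proof -
  obtain \<rho> where r: "\<rho> permutes U" "\<rho> ` P2 = P1" using exists_perm_map[OF assms] by blast
  have "inj_on (\<lambda>\<sigma>. \<sigma> \<circ> \<rho>) {\<sigma>. \<sigma> permutes U \<and> \<sigma> ` P1 \<subseteq> Q}"
  proof (rule inj_onI)
    fix s t assume "s \<circ> \<rho> = t \<circ> \<rho>"
    then have "s \<circ> \<rho> \<circ> inv \<rho> = t \<circ> \<rho> \<circ> inv \<rho>" by simp
    then show "s = t" using permutes_inverses(1)[OF r(1)] by (simp add: o_assoc[symmetric] comp_def fun_eq_iff)
  qed
  moreover have "(\<lambda>\<sigma>. \<sigma> \<circ> \<rho>) ` {\<sigma>. \<sigma> permutes U \<and> \<sigma> ` P1 \<subseteq> Q} \<subseteq> {\<sigma>. \<sigma> permutes U \<and> \<sigma> ` P2 \<subseteq> Q}"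
    using r by (auto simp: permutes_compose image_comp[symmetric])
  moreover have "finite {\<sigma>. \<sigma> permutes U \<and> \<sigma> ` P2 \<subseteq> Q}"
    using finite_permutations[OF assms(1)] by (rule finite_subset[rotated]) auto
  ultimately show ?thesis by (rule card_inj_on_le)
qed

lemma perm_count_eq:
  assumes "finite U" "P1 \<subseteq> U" "P2 \<subseteq> U" "card P1 = card P2"
  shows "card {\<sigma>. \<sigma> permutes U \<and> \<sigma> ` P1 \<subseteq> Q} = card {\<sigma>. \<sigma> permutes U \<and> \<sigma> ` P2 \<subseteq> Q}"
  using perm_count_le[OF assms, of Q] perm_count_le[OF assms(1,3,2) assms(4)[symmetric], of Q] by simp

lemma subsets_image_count:
  assumes "\<sigma> permutes U" "Q \<subseteq> U"
  shows "card {P'. (P' \<subseteq> U \<and> card P' = m) \<and> \<sigma> ` P' \<subseteq> Q} = card {R. R \<subseteq> Q \<and> card R = m}"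
proof -
  have inj: "inj \<sigma>" using assms(1) by (rule permutes_inj)
  have surj: "surj \<sigma>" using assms(1) by (rule permutes_surj)
  have ci: "card (\<sigma> ` X) = card X" for X using card_image[OF inj_on_subset[OF inj subset_UNIV]] .
  have ii: "inj_on ((`) \<sigma>) {P'. (P' \<subseteq> U \<and> card P' = m) \<and> \<sigma> ` P' \<subseteq> Q}"
  proof (rule inj_onI)
    fix X Y assume "\<sigma> ` X = \<sigma> ` Y"
    then show "X = Y" by (simp only: inj_image_eq_iff[OF inj])
  qed
  have ie: "(`) \<sigma> ` {P'. (P' \<subseteq> U \<and> card P' = m) \<and> \<sigma> ` P' \<subseteq> Q} = {R. R \<subseteq> Q \<and> card R = m}"
  proof (intro equalityI subsetI)
    fix R assume "R \<in> (`) \<sigma> ` {P'. (P' \<subseteq> U \<and> card P' = m) \<and> \<sigma> ` P' \<subseteq> Q}"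
    then obtain P' where "P' \<subseteq> U" "card P' = m" "\<sigma> ` P' \<subseteq> Q" "R = \<sigma> ` P'" by blast
    then show "R \<in> {R. R \<subseteq> Q \<and> card R = m}" by (simp add: ci)
  next
    fix R assume R: "R \<in> {R. R \<subseteq> Q \<and> card R = m}"
    have iv: "inv \<sigma> permutes U" using assms(1) by (rule permutes_inv)
    have e: "\<sigma> ` (inv \<sigma> ` R) = R" using surj by (rule image_f_inv_f)
    have "inv \<sigma> ` R \<subseteq> U"
    proof
      fix x assume "x \<in> inv \<sigma> ` R"
      then obtain y where "y \<in> R" "x = inv \<sigma> y" by blast
      then have "y \<in> U" using R assms(2) by blast
      then show "x \<in> U" using permutes_in_image[OF iv] \<open>x = inv \<sigma> y\<close> by simp
    qed
    moreover have "card (inv \<sigma> ` R) = m" using R e ci[of "inv \<sigma> ` R"] by simp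
    moreover have "\<sigma> ` (inv \<sigma> ` R) \<subseteq> Q" using e R by simp
    ultimately have "inv \<sigma> ` R \<in> {P'. (P' \<subseteq> U \<and> card P' = m) \<and> \<sigma> ` P' \<subseteq> Q}" by simp
    then show "R \<in> (`) \<sigma> ` {P'. (P' \<subseteq> U \<and> card P' = m) \<and> \<sigma> ` P' \<subseteq> Q}"
      using e[symmetric] by (rule rev_image_eqI)
  qed
  show ?thesis using card_image[OF ii] unfolding ie by (rule sym)
qed

lemma perm_count:
  assumes "finite U" "P \<subseteq> U" "Q \<subseteq> U"
  shows "card {\<sigma>. \<sigma> permutes U \<and> \<sigma> ` P \<subseteq> Q} * (card U choose card P) = fact (card U) * (card Q choose card P)"
proof -
  define m where "m = card P"
  define Ps where "Ps = {P'. P' \<subseteq> U \<and> card P' = m}"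
  define Pm where "Pm = {\<sigma>. \<sigma> permutes U}"
  have fPs: "finite Ps" by (rule finite_subset[of _ "Pow U"]) (auto simp: Ps_def assms(1))
  have fPm: "finite Pm" using assms(1) by (simp add: Pm_def finite_permutations)
  have fQ: "finite Q" using assms finite_subset by auto
  have "(\<Sum>P'\<in>Ps. card {\<sigma>. \<sigma> permutes U \<and> \<sigma> ` P' \<subseteq> Q}) = (\<Sum>P'\<in>Ps. card {\<sigma>. \<sigma> permutes U \<and> \<sigma> ` P \<subseteq> Q})"
  proof (rule sum.cong[OF refl])
    fix P' assume "P' \<in> Ps"
    then have "P' \<subseteq> U" "card P' = card P" by (simp_all add: Ps_def m_def)
    then show "card {\<sigma>. \<sigma> permutes U \<and> \<sigma> ` P' \<subseteq> Q} = card {\<sigma>. \<sigma> permutes U \<and> \<sigma> ` P \<subseteq> Q}"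
      using perm_count_eq[OF assms(1) _ assms(2), of P' Q] by simp
  qed
  also have "\<dots> = card Ps * card {\<sigma>. \<sigma> permutes U \<and> \<sigma> ` P \<subseteq> Q}" by simp
  also have "card Ps = card U choose m" unfolding Ps_def by (rule n_subsets[OF assms(1)])
  finally have e1: "(\<Sum>P'\<in>Ps. card {\<sigma>. \<sigma> permutes U \<and> \<sigma> ` P' \<subseteq> Q}) = (card U choose m) * card {\<sigma>. \<sigma> permutes U \<and> \<sigma> ` P \<subseteq> Q}" .
  have "(\<Sum>P'\<in>Ps. card {\<sigma>. \<sigma> permutes U \<and> \<sigma> ` P' \<subseteq> Q}) = (\<Sum>P'\<in>Ps. \<Sum>\<sigma>\<in>Pm. if \<sigma> ` P' \<subseteq> Q then 1 else 0)"
  proof (rule sum.cong[OF refl])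
    fix P' assume "P' \<in> Ps"
    have "card {\<sigma>. \<sigma> permutes U \<and> \<sigma> ` P' \<subseteq> Q} = card {\<sigma>\<in>Pm. \<sigma> ` P' \<subseteq> Q}" by (simp add: Pm_def)
    also have "\<dots> = (\<Sum>\<sigma>\<in>{\<sigma>\<in>Pm. \<sigma> ` P' \<subseteq> Q}. 1)" by simp
    also have "\<dots> = (\<Sum>\<sigma>\<in>Pm. if \<sigma> ` P' \<subseteq> Q then 1 else 0)" by (rule sum.inter_filter[OF fPm])
    finally show "card {\<sigma>. \<sigma> permutes U \<and> \<sigma> ` P' \<subseteq> Q} = (\<Sum>\<sigma>\<in>Pm. if \<sigma> ` P' \<subseteq> Q then 1 else 0)" .
  qed
  also have "\<dots> = (\<Sum>\<sigma>\<in>Pm. \<Sum>P'\<in>Ps. if \<sigma> ` P' \<subseteq> Q then 1 else 0)" by (rule sum.swap)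
  also have "\<dots> = (\<Sum>\<sigma>\<in>Pm. card {P'. (P' \<subseteq> U \<and> card P' = m) \<and> \<sigma> ` P' \<subseteq> Q})"
  proof (rule sum.cong[OF refl])
    fix \<sigma> assume "\<sigma> \<in> Pm"
    have "(\<Sum>P'\<in>Ps. if \<sigma> ` P' \<subseteq> Q then 1 else 0) = (\<Sum>P'\<in>{P'\<in>Ps. \<sigma> ` P' \<subseteq> Q}. 1)"
      by (rule sum.inter_filter[OF fPs, symmetric])
    also have "\<dots> = card {P'\<in>Ps. \<sigma> ` P' \<subseteq> Q}" by simp
    finally show "(\<Sum>P'\<in>Ps. if \<sigma> ` P' \<subseteq> Q then 1 else 0) = card {P'. (P' \<subseteq> U \<and> card P' = m) \<and> \<sigma> ` P' \<subseteq> Q}"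
      by (simp add: Ps_def)
  qed
  also have "\<dots> = (\<Sum>\<sigma>\<in>Pm. card Q choose m)"
  proof (rule sum.cong[OF refl])
    fix \<sigma> assume "\<sigma> \<in> Pm"
    then have "\<sigma> permutes U" by (simp add: Pm_def)
    then show "card {P'. (P' \<subseteq> U \<and> card P' = m) \<and> \<sigma> ` P' \<subseteq> Q} = card Q choose m"
      using subsets_image_count[of \<sigma> U Q m] n_subsets[OF fQ, of m] assms(3) by simp
  qed
  also have "\<dots> = card Pm * (card Q choose m)" by simp
  also have "card Pm = fact (card U)" unfolding Pm_def by (rule card_permutations[OF refl assms(1)])
  finally have e2: "(\<Sum>P'\<in>Ps. card {\<sigma>. \<sigma> permutes U \<and> \<sigma> ` P' \<subseteq> Q}) = fact (card U) * (card Q choose m)" .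
  show ?thesis using e1 e2 unfolding m_def by (simp only: mult.commute)
qed



lemma binom_ratio_nat:
  assumes "q \<le> N"
  shows "(q choose m) * N^m \<le> (N choose m) * q^m"
proof (induction m)
  case 0 then show ?case by simp
next
  case (Suc m)
  have e: "Suc m * (n choose Suc m) = (n - m) * (n choose m)" for n
    by (simp only: binomial_absorption binomial_absorb_comp)
  have "Suc m * ((q choose Suc m) * N ^ Suc m) = (Suc m * (q choose Suc m)) * N ^ Suc m"
    by (simp only: mult.assoc)
  also have "\<dots> = ((q - m) * (q choose m)) * N ^ Suc m" by (simp only: e)
  also have "\<dots> = ((q - m) * N) * ((q choose m) * N^m)" by (simp only: power_Suc mult_ac)
  also have "\<dots> \<le> ((N - m) * q) * ((N choose m) * q^m)"
  proof (rule mult_mono)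
    have a: "(q - m) * N = q*N - m*N" by (simp add: diff_mult_distrib)
    have b: "(N - m) * q = N*q - m*q" by (simp add: diff_mult_distrib)
    have "m*q \<le> m*N" using assms by simp
    then have "q*N - m*N \<le> N*q - m*q" by (subst mult.commute[of q N]) (rule diff_le_mono2)
    then show "(q - m) * N \<le> (N - m) * q" by (simp only: a b)
  qed (use Suc.IH in auto)
  also have "\<dots> = ((N - m) * (N choose m)) * q ^ Suc m" by (simp only: power_Suc mult_ac)
  also have "\<dots> = (Suc m * (N choose Suc m)) * q ^ Suc m" by (simp only: e)
  also have "\<dots> = Suc m * ((N choose Suc m) * q ^ Suc m)" by (simp only: mult.assoc)
  finally show ?case by (simp only: mult_le_cancel1)
qed

lemma perm_count_bound:
  assumes "finite U" "P \<subseteq> U" "Q \<subseteq> U" "card U > 0"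
  shows "real (card {\<sigma>. \<sigma> permutes U \<and> \<sigma> ` P \<subseteq> Q}) \<le> fact (card U) * (real (card Q) / real (card U)) ^ card P"
proof -
  define N where "N = card U"
  define m where "m = card P"
  define q where "q = card Q"
  define c where "c = card {\<sigma>. \<sigma> permutes U \<and> \<sigma> ` P \<subseteq> Q}"
  have mN: "m \<le> N" using assms card_mono unfolding m_def N_def by blast
  have qN: "q \<le> N" using assms card_mono unfolding q_def N_def by blast
  have pc: "c * (N choose m) = fact N * (q choose m)" using perm_count[OF assms(1-3)] by (simp add: c_def N_def m_def q_def)
  have br: "real (q choose m) * real N ^ m \<le> real (N choose m) * real q ^ m"
    using binom_ratio_nat[OF qN, of m] by (metis of_nat_le_iff of_nat_mult of_nat_power)
  have pos: "real (N choose m) * real N ^ m > 0" using mN assms(4) by (simp add: N_def)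
  have "real c * (real (N choose m) * real N ^ m) = fact N * (real (q choose m) * real N ^ m)"
    using arg_cong[OF pc, of real] by (simp add: algebra_simps)
  also have "\<dots> \<le> fact N * (real (N choose m) * real q ^ m)"
    using br by (simp add: mult_left_mono)
  also have "\<dots> = (fact N * (real q / real N) ^ m) * (real (N choose m) * real N ^ m)"
    using assms(4) by (simp add: N_def power_divide field_simps)
  finally have "real c \<le> fact N * (real q / real N) ^ m"
    using pos by (simp only: mult_le_cancel_right_pos)
  then show ?thesis by (simp add: c_def N_def m_def q_def)
qed

definition pts :: "nat \<Rightarrow> nat set \<Rightarrow> nat set" where
  "pts D A = {i. i div D \<in> A}"

lemma pts_eq_image:
  assumes "D > 0"
  shows "pts D A = (\<lambda>(a,r). a*D+r) ` (A \<times> {..<D})"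
proof (intro equalityI subsetI)
  fix i assume "i \<in> pts D A"
  then have "(i div D, i mod D) \<in> A \<times> {..<D}" using assms by (simp add: pts_def)
  moreover have "i = (\<lambda>(a,r). a*D+r) (i div D, i mod D)" by simp
  ultimately show "i \<in> (\<lambda>(a,r). a*D+r) ` (A \<times> {..<D})" by (rule image_eqI[rotated])
qed (use assms in \<open>auto simp: pts_def\<close>)

lemma finite_pts:
  assumes "D > 0" "finite A" shows "finite (pts D A)"
proof -
  have "finite ((\<lambda>(a,r). a*D+r) ` (A \<times> {..<D}))"
    using assms(2) by (intro finite_imageI finite_cartesian_product) auto
  then show ?thesis by (simp only: pts_eq_image[OF assms(1)])
qed

lemma card_pts:
  assumes "D > 0" "finite A"
  shows "card (pts D A) = D * card A"
proof -
  have "pts D A = (\<lambda>(a,r). a*D+r) ` (A \<times> {..<D})" by (rule pts_eq_image[OF assms(1)])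
  moreover have "inj_on (\<lambda>(a,r). a*D+r) (A \<times> {..<D})"
  proof (rule inj_onI, clarify)
    fix a r a' r' assume "r < D" "r' < D" "a*D+r = a'*D+r'"
    then have "(a*D+r) div D = (a'*D+r') div D" "(a*D+r) mod D = (a'*D+r') mod D" by simp_all
    then show "a = a' \<and> r = r'" using \<open>r < D\<close> \<open>r' < D\<close> by simp
  qed
  ultimately show ?thesis using assms by (simp add: card_image card_cartesian_product)
qed

lemma pts_sub:
  assumes "D > 0" "A \<subseteq> {..<n}"
  shows "pts D A \<subseteq> {..<n*D}"
  using assms by (auto simp: pts_def div_less_iff_less_mult)



lemma bad_subset:
  assumes "D > 0"
  shows "{\<sigma> \<in> configs D n. has_induced_matching D n \<sigma> k} \<subseteq>
    (\<Union>A\<in>{A. A \<subseteq> {..<n} \<and> card A = k}. \<Union>B\<in>{A. A \<subseteq> {..<n} \<and> card A = k}.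
      \<Union>P\<in>{P. P \<subseteq> pts D A \<and> card P = k*D - k}.
        {\<sigma>. \<sigma> permutes {..<n*D} \<and> \<sigma> ` P \<subseteq> {..<n*D} - pts D B})"
proof
  fix \<sigma> assume asm: "\<sigma> \<in> {\<sigma> \<in> configs D n. has_induced_matching D n \<sigma> k}"
  then have perm: "\<sigma> permutes {..<n*D}" and hm: "has_induced_matching D n \<sigma> k"
    by (simp_all add: configs_def)
  from hm obtain S where im: "induced_matching D n \<sigma> S" and cS: "card S = k"
    unfolding has_induced_matching_def by blast
  from im have SU: "S \<subseteq> {..<n*D}"
    and inj1: "inj_on (\<lambda>i. i div D) S" and inj2: "inj_on (\<lambda>i. \<sigma> i div D) S"
    and ind0: "\<forall>j<n*D. j div D \<in> (\<lambda>i. i div D) ` S \<and> \<sigma> j div D \<in> (\<lambda>i. \<sigma> i div D) ` S \<longrightarrow> j \<in> S"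
    unfolding induced_matching_def by blast+
  have ind: "\<And>j. j < n*D \<Longrightarrow> j div D \<in> (\<lambda>i. i div D) ` S \<Longrightarrow> \<sigma> j div D \<in> (\<lambda>i. \<sigma> i div D) ` S \<Longrightarrow> j \<in> S"
    using ind0 by blast
  define A where "A = (\<lambda>i. i div D) ` S"
  define B where "B = (\<lambda>i. \<sigma> i div D) ` S"
  define P where "P = pts D A - S"
  have fS: "finite S" using SU finite_subset by blast
  have A: "A \<subseteq> {..<n} \<and> card A = k"
    using SU inj1 cS by (auto simp: A_def card_image div_less_iff_less_mult assms)
  have B: "B \<subseteq> {..<n} \<and> card B = k"
    using SU inj2 cS permutes_in_image[OF perm] by (auto simp: B_def card_image div_less_iff_less_mult assms)
  have SA: "S \<subseteq> pts D A" by (auto simp: pts_def A_def)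
  have "card P = k*D - k"
    using card_Diff_subset[OF fS SA] card_pts[OF assms, of A] A finite_subset[of A "{..<n}"]
    by (simp add: P_def cS mult.commute)
  then have P: "P \<subseteq> pts D A \<and> card P = k*D - k" by (auto simp: P_def)
  have PU: "pts D A \<subseteq> {..<n*D}" using pts_sub[OF assms] A by blast
  have imgP0: "\<sigma> ` P \<subseteq> {..<n*D} - pts D B"
  proof
    fix y assume "y \<in> \<sigma> ` P"
    then obtain j where j: "j \<in> P" "y = \<sigma> j" by blast
    have jU: "j < n*D" using j PU by (auto simp: P_def)
    then have "y < n*D" using j permutes_in_image[OF perm] by auto
    moreover have "y \<notin> pts D B"
    proof
      assume "y \<in> pts D B"
      then have "\<sigma> j div D \<in> B" using j by (simp add: pts_def)
      moreover have "j div D \<in> A" using j by (simp add: P_def pts_def)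
      ultimately have "j \<in> S" using ind[OF jU] by (simp add: A_def B_def)
      then show False using j by (simp add: P_def)
    qed
    ultimately show "y \<in> {..<n*D} - pts D B" by simp
  qed
  note imgP = imgP0
  show "\<sigma> \<in> (\<Union>A\<in>{A. A \<subseteq> {..<n} \<and> card A = k}. \<Union>B\<in>{A. A \<subseteq> {..<n} \<and> card A = k}.
      \<Union>P\<in>{P. P \<subseteq> pts D A \<and> card P = k*D - k}.
        {\<sigma>. \<sigma> permutes {..<n*D} \<and> \<sigma> ` P \<subseteq> {..<n*D} - pts D B})"
  proof (rule UN_I[of A])
    show "A \<in> {A. A \<subseteq> {..<n} \<and> card A = k}" using A by simp
    show "\<sigma> \<in> (\<Union>B\<in>{A. A \<subseteq> {..<n} \<and> card A = k}. \<Union>P\<in>{P. P \<subseteq> pts D A \<and> card P = k*D - k}.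
        {\<sigma>. \<sigma> permutes {..<n*D} \<and> \<sigma> ` P \<subseteq> {..<n*D} - pts D B})"
    proof (rule UN_I[of B])
      show "B \<in> {A. A \<subseteq> {..<n} \<and> card A = k}" using B by simp
      show "\<sigma> \<in> (\<Union>P\<in>{P. P \<subseteq> pts D A \<and> card P = k*D - k}.
        {\<sigma>. \<sigma> permutes {..<n*D} \<and> \<sigma> ` P \<subseteq> {..<n*D} - pts D B})"
        by (rule UN_I[of P]) (use P perm \<open>\<sigma> ` P \<subseteq> {..<n*D} - pts D B\<close> in auto)
    qed
  qed
qed

lemma card_UN_real:
  assumes "finite I"
  shows "real (card (\<Union>i\<in>I. F i)) \<le> (\<Sum>i\<in>I. real (card (F i)))"
  using card_UN_le[OF assms, of F] by (metis of_nat_le_iff of_nat_sum)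

lemma bad_bound:
  assumes "D > 0" "n > 0"
  shows "real (card {\<sigma> \<in> configs D n. has_induced_matching D n \<sigma> k}) \<le>
    real (n choose k) ^ 2 * real (k*D choose k) * fact (n*D) * (1 - real k / real n) ^ (k*D - k)"
proof -
  define U where "U = {..<n*D}"
  define Ks where "Ks = {A. A \<subseteq> {..<n} \<and> card A = k}"
  define Ps where "Ps A = {P. P \<subseteq> pts D A \<and> card P = k*D - k}" for A
  define E where "E B P = {\<sigma>. \<sigma> permutes U \<and> \<sigma> ` P \<subseteq> U - pts D B}" for B P
  define c where "c = fact (n*D) * (1 - real k / real n) ^ (k*D - k)"
  have fU: "finite U" by (simp add: U_def)
  have fKs: "finite Ks" by (simp add: Ks_def)
  have fPs: "finite (Ps A)" if "A \<in> Ks" for A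
  proof -
    have "finite A" using that finite_subset by (auto simp: Ks_def)
    then have "finite (pts D A)" using finite_pts[OF assms(1)] by blast
    then show ?thesis by (simp add: Ps_def)
  qed
  have fin: "finite (\<Union>A\<in>Ks. \<Union>B\<in>Ks. \<Union>P\<in>Ps A. E B P)"
    by (rule finite_subset[OF _ finite_permutations[OF fU]]) (auto simp: E_def)
  have "real (card {\<sigma> \<in> configs D n. has_induced_matching D n \<sigma> k}) \<le> real (card (\<Union>A\<in>Ks. \<Union>B\<in>Ks. \<Union>P\<in>Ps A. E B P))"
  proof -
    have sub: "{\<sigma> \<in> configs D n. has_induced_matching D n \<sigma> k} \<subseteq> (\<Union>A\<in>Ks. \<Union>B\<in>Ks. \<Union>P\<in>Ps A. E B P)"
      using bad_subset[OF assms(1), of n k] unfolding Ks_def Ps_def E_def U_def .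
    show ?thesis using card_mono[OF fin sub] by simp
  qed
  also have "\<dots> \<le> (\<Sum>A\<in>Ks. real (card (\<Union>B\<in>Ks. \<Union>P\<in>Ps A. E B P)))" by (rule card_UN_real[OF fKs])
  also have "\<dots> \<le> (\<Sum>A\<in>Ks. \<Sum>B\<in>Ks. real (card (\<Union>P\<in>Ps A. E B P)))"
    by (rule sum_mono, rule card_UN_real[OF fKs])
  also have "\<dots> \<le> (\<Sum>A\<in>Ks. \<Sum>B\<in>Ks. \<Sum>P\<in>Ps A. real (card (E B P)))"
    by (intro sum_mono card_UN_real fPs)
  also have "\<dots> \<le> (\<Sum>A\<in>Ks. \<Sum>B\<in>Ks. \<Sum>P\<in>Ps A. c)"
  proof (intro sum_mono)
    fix A B P assume A: "A \<in> Ks" and B: "B \<in> Ks" and P: "P \<in> Ps A"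
    have fB: "finite B" using B finite_subset by (auto simp: Ks_def)
    have kn: "k \<le> n" using B card_mono[of "{..<n}" B] by (auto simp: Ks_def)
    have PU: "P \<subseteq> U" using P A pts_sub[OF assms(1), of A n] by (auto simp: Ps_def Ks_def U_def)
    have BU: "pts D B \<subseteq> U" using B pts_sub[OF assms(1), of B n] by (auto simp: Ks_def U_def)
    have cQ: "card (U - pts D B) = n*D - k*D"
      using card_Diff_subset[OF _ BU] card_pts[OF assms(1) fB] B finite_subset[OF BU fU]
      by (simp add: U_def Ks_def mult.commute)
    have cU: "card U = n*D" by (simp add: U_def)
    have "real (card (E B P)) \<le> fact (card U) * (real (card (U - pts D B)) / real (card U)) ^ card P"
      unfolding E_def by (rule perm_count_bound[OF fU PU]) (use assms in \<open>auto simp: cU\<close>)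
    also have "real (card (U - pts D B)) / real (card U) = 1 - real k / real n"
      using kn assms by (simp add: cQ cU of_nat_diff field_simps)
    finally show "real (card (E B P)) \<le> c" using P by (simp add: c_def Ps_def cU)
  qed
  also have "\<dots> = real (n choose k) ^ 2 * real (k*D choose k) * c"
  proof -
    have "card Ks = n choose k" by (simp add: Ks_def n_subsets)
    moreover have "card (Ps A) = k*D choose k" if "A \<in> Ks" for A
    proof -
      have "finite A" using that finite_subset by (auto simp: Ks_def)
      then have "card (pts D A) = k*D" using card_pts[OF assms(1)] that by (simp add: Ks_def)
      moreover have "finite (pts D A)" using finite_pts[OF assms(1) \<open>finite A\<close>] .
      moreover have "k \<le> k*D" using assms(1) by simp
      ultimately show ?thesis
        using binomial_symmetric[of k "k*D"] by (simp add: Ps_def n_subsets)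
    qed
    ultimately show ?thesis by (simp add: power2_eq_square)
  qed
  finally show ?thesis by (simp add: c_def mult.assoc)
qed



lemma pow_fact_le_exp: "real k ^ k / fact k \<le> exp (real k)"
proof -
  have s: "(\<lambda>j. real k ^ j /\<^sub>R fact j) sums exp (real k)" by (rule exp_converges)
  have "(\<Sum>j\<in>{k}. real k ^ j /\<^sub>R fact j) \<le> (\<Sum>j. real k ^ j /\<^sub>R fact j)"
    by (rule sum_le_suminf) (use s in \<open>auto simp: sums_iff\<close>)
  then show ?thesis using s by (simp add: sums_iff divide_inverse_commute)
qed

lemma binom_le_real: "real (n choose k) \<le> real n ^ k / fact k"
proof -
  have "real (n choose k) * fact k \<le> real n ^ k"
    using binomial_fact_pow[of n k] by (metis of_nat_fact of_nat_le_iff of_nat_mult of_nat_power)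
  then show ?thesis by (simp add: field_simps)
qed

lemma e_bounds: "exp 1 > (2718/1000::real)" "exp 1 < (272/100::real)"
  using e_approx_32 by (auto simp: abs_if split: if_splits)

lemma ln_le_div_e: fixes x :: real assumes "x > 0" shows "ln x \<le> x / exp 1"
proof -
  have "ln (x / exp 1) \<le> x / exp 1 - 1" using assms by (intro ln_le_minus_one) auto
  then show ?thesis using assms by (simp add: ln_div)
qed

lemma exp_small: fixes x :: real assumes "x < 1" shows "exp x \<le> 1 / (1 - x)"
proof -
  have "1 - x \<le> exp (-x)" using exp_ge_add_one_self[of "-x"] by simp
  then have "(1 - x) * exp x \<le> 1" by (simp add: exp_minus field_simps)
  then show ?thesis using assms by (simp add: field_simps)
qed

lemma base_lt_1:
  fixes D :: real
  assumes D: "D \<ge> 21"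
  defines "\<alpha> \<equiv> 3 * ln D / D"
  shows "(exp 1 / \<alpha>)^2 * (exp 1 * D) * exp (- \<alpha> * (D - 1)) < 1"
proof -
  define L where "L = ln D"
  have e3: "exp (3::real) < 21"
  proof -
    have "exp (3::real) = exp 1 ^ 3" by (simp flip: exp_of_nat_mult)
    also have "\<dots> < (272/100) ^ 3" using e_bounds by (intro power_strict_mono) auto
    also have "\<dots> < 21" by (simp add: power3_eq_cube)
    finally show ?thesis .
  qed
  have L3: "L \<ge> 3"
  proof -
    have "exp 3 \<le> D" using e3 D by simp
    then show ?thesis unfolding L_def using D by (simp add: ln_ge_iff)
  qed
  have LD: "L / D \<le> 1 / exp 1" using ln_le_div_e[of D] D by (simp add: L_def field_simps)
  have LD2: "3 * L / D \<le> 111/100"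
  proof -
    have "3 * L / D \<le> 3 * (1 / exp 1)" using mult_left_mono[OF LD, of 3] by simp
    also have "\<dots> \<le> 111/100" using e_bounds by (simp add: field_simps)
    finally show ?thesis .
  qed
  have Dp: "D > 0" using D by simp
  have ap: "\<alpha> > 0" using L3 Dp D unfolding \<alpha>_def L_def by (intro divide_pos_pos) auto
  have "exp (- \<alpha> * (D - 1)) = exp (3 * L / D) / D^3"
  proof -
    have "- \<alpha> * (D - 1) = 3 * L / D - 3 * L" using Dp by (simp add: \<alpha>_def L_def field_simps)
    then have "exp (- \<alpha> * (D - 1)) = exp (3 * L / D) / exp (3 * L)" by (simp add: exp_diff)
    moreover have "exp (3 * L) = exp L ^ 3" using exp_of_nat_mult[of 3 L] by simp
    then have "exp (3 * L) = D^3" using Dp by (simp add: L_def)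
    ultimately show ?thesis by simp
  qed
  then have eq: "(exp 1 / \<alpha>)^2 * (exp 1 * D) * exp (- \<alpha> * (D - 1)) = exp 1 ^ 3 * exp (3 * L / D) / (9 * L^2)"
    using Dp L3 by (simp add: \<alpha>_def L_def field_simps power2_eq_square power3_eq_cube)
  have "exp 1 ^ 3 * exp (3 * L / D) \<le> exp 1 ^ 3 * exp (111/100)"
    using LD2 by simp
  also have "exp (111/100::real) = exp 1 * exp (11/100)" by (simp flip: exp_add)
  also have "exp (11/100::real) \<le> 1 / (1 - 11/100)" by (rule exp_small) simp
  finally have "exp 1 ^ 3 * exp (3 * L / D) \<le> exp 1 ^ 4 * (100/89)" by (simp add: power4_eq_xxxx power3_eq_cube)
  also have "\<dots> \<le> (272/100)^4 * (100/89)" using e_bounds by (intro mult_right_mono power_mono) auto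
  also have "\<dots> < 9 * L^2" proof -
    have "(81::real) \<le> 9 * L^2" using L3 power_mono[of 3 L 2] by simp
    moreover have "(272/100::real)^4 * (100/89) < 81" by (simp add: power4_eq_xxxx)
    ultimately show ?thesis by linarith
  qed
  finally have Y: "exp 1 ^ 3 * exp (3 * L / D) < 9 * L^2" .
  have pos: "9 * L^2 > 0" using L3 by simp
  have "exp 1 ^ 3 * exp (3 * L / D) / (9 * L^2) < 1" using Y pos by (simp add: pos_divide_less_eq)
  then show ?thesis unfolding eq .
qed



lemma analytic:
  fixes D n k :: nat
  assumes D: "D \<ge> 21" and n: "n > 0" and kb: "real k \<ge> 3 * real n * ln (real D) / real D"
  defines "\<alpha> \<equiv> 3 * ln (real D) / real D"
  defines "b \<equiv> (exp 1 / \<alpha>)^2 * (exp 1 * real D) * exp (- \<alpha> * (real D - 1))"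
  shows "real (n choose k) ^ 2 * real (k*D choose k) * (1 - real k / real n) ^ (k*D - k) \<le> b ^ k"
proof -
  have Dp: "real D > 0" using D by simp
  have lnD: "ln (real D) > 0" using D by simp
  have ap: "\<alpha> > 0" unfolding \<alpha>_def using lnD Dp by (intro divide_pos_pos) auto
  have bpos: "b \<ge> 0" unfolding b_def by simp
  have kb': "real k \<ge> \<alpha> * real n" using kb by (simp add: \<alpha>_def mult_ac)
  show ?thesis
  proof (cases "k \<le> n")
    case False
    then have z: "real (n choose k) = 0" by simp
    show ?thesis by (simp only: z power_zero_numeral mult_zero_left zero_le_power bpos)
  next
    case True
    define t where "t = real k / real n"
    have kpos: "real k > 0" using kb' ap n by (smt (verit) mult_pos_pos of_nat_0_less_iff)
    have tpos: "t > 0" using kpos n by (simp add: t_def)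
    have ta: "t \<ge> \<alpha>" using kb' n by (simp add: t_def field_simps)
    have t1: "t \<le> 1" using True n by (simp add: t_def)
    have kf: "real k ^ k / fact k \<le> exp 1 ^ k"
      using pow_fact_le_exp[of k] exp_of_nat_mult[of k "1::real"] by simp
    have c1: "real (n choose k) \<le> (exp 1 / t) ^ k"
    proof -
      have "real (n choose k) \<le> real n ^ k / fact k" by (rule binom_le_real)
      also have "\<dots> = (1 / t) ^ k * (real k ^ k / fact k)"
        using kpos n by (simp add: t_def power_divide)
      also have "\<dots> \<le> (1 / t) ^ k * exp 1 ^ k"
        using kf tpos by (intro mult_left_mono) auto
      also have "\<dots> = (exp 1 / t) ^ k" by (simp add: power_mult_distrib[symmetric])
      finally show ?thesis .
    qed
    have c2: "real (k*D choose k) \<le> (exp 1 * real D) ^ k"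
    proof -
      have "real (k*D choose k) \<le> real (k*D) ^ k / fact k" by (rule binom_le_real)
      also have "\<dots> = real D ^ k * (real k ^ k / fact k)"
        by (simp add: power_mult_distrib)
      also have "\<dots> \<le> real D ^ k * exp 1 ^ k"
        using kf by (intro mult_left_mono) auto
      also have "\<dots> = (exp 1 * real D) ^ k" by (simp add: power_mult_distrib)
      finally show ?thesis .
    qed
    have c3: "(1 - t) ^ (k*D - k) \<le> exp (- t * (real D - 1)) ^ k"
    proof -
      have "(D - 1) * k = D*k - k" by (simp add: diff_mult_distrib)
      then have "k*D - k = (D - 1) * k" by (metis mult.commute)
      then have "(1 - t) ^ (k*D - k) = ((1 - t) ^ (D - 1)) ^ k" by (simp add: power_mult)
      also have "\<dots> \<le> (exp (- t) ^ (D - 1)) ^ k"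
        using t1 exp_ge_add_one_self[of "-t"] by (intro power_mono) auto
      also have "exp (- t) ^ (D - 1) = exp (- t * (real D - 1))"
        using D exp_of_nat_mult[of "D - 1" "-t"] by (simp add: of_nat_diff mult.commute)
      finally show ?thesis .
    qed
    have "real (n choose k) ^ 2 * real (k*D choose k) * (1 - real k / real n) ^ (k*D - k)
        \<le> ((exp 1 / t) ^ k) ^ 2 * (exp 1 * real D) ^ k * exp (- t * (real D - 1)) ^ k"
      unfolding t_def[symmetric] using c1 c2 c3 t1
      by (intro mult_mono power_mono) auto
    also have "\<dots> = ((exp 1 / t) ^ 2 * (exp 1 * real D) * exp (- t * (real D - 1))) ^ k"
      by (simp add: power_mult_distrib power_mult[symmetric] mult.commute)
    also have "\<dots> \<le> b ^ k"
    proof -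
      have b1: "(exp 1 / t) ^ 2 \<le> (exp 1 / \<alpha>) ^ 2" using ta ap by (intro power_mono divide_left_mono) auto
      have b2: "exp (- t * (real D - 1)) \<le> exp (- \<alpha> * (real D - 1))" using ta D by (simp add: mult_right_mono)
      have "(exp 1 / t) ^ 2 * (exp 1 * real D) * exp (- t * (real D - 1)) \<le> b"
        unfolding b_def using b1 b2 Dp by (intro mult_mono) auto
      then show ?thesis using tpos by (intro power_mono) auto
    qed
    finally show ?thesis .
  qed
qed



theorem lemma4p4:
  fixes D :: nat
  assumes "D \<ge> 21"
  shows "(\<lambda>n. real (card {\<sigma> \<in> configs D n.
              has_induced_matching D n \<sigma> (nat \<lceil>3 * real n * ln (real D) / real D\<rceil>)})
            / real (card (configs D n))) \<longlonglongrightarrow> 0"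
proof -
  define \<alpha> where "\<alpha> = 3 * ln (real D) / real D"
  define b where "b = (exp 1 / \<alpha>)^2 * (exp 1 * real D) * exp (- \<alpha> * (real D - 1))"
  define k where "k n = nat \<lceil>3 * real n * ln (real D) / real D\<rceil>" for n
  define r where "r n = real (card {\<sigma> \<in> configs D n. has_induced_matching D n \<sigma> (k n)})
            / real (card (configs D n))" for n
  have Dp: "D > 0" using assms by simp
  have lnD: "ln (real D) > 0" using assms by simp
  have ap: "\<alpha> > 0" unfolding \<alpha>_def using lnD Dp by (intro divide_pos_pos) auto
  have b1: "b < 1" unfolding b_def \<alpha>_def by (rule base_lt_1) (use assms in simp)
  have b0: "b \<ge> 0" unfolding b_def by simp
  have kge: "real (k n) \<ge> 3 * real n * ln (real D) / real D" for n
    unfolding k_def by linarith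
  have kfil: "filterlim k at_top sequentially"
    unfolding filterlim_at_top eventually_sequentially
  proof
    fix Z :: nat
    show "\<exists>N. \<forall>n\<ge>N. Z \<le> k n"
    proof (intro exI allI impI)
      fix n assume "nat \<lceil>real Z / \<alpha>\<rceil> \<le> n"
      then have "real Z / \<alpha> \<le> real n" by linarith
      then have "real Z \<le> \<alpha> * real n" using ap by (simp add: field_simps)
      also have "\<dots> \<le> real (k n)" using kge[of n] by (simp add: \<alpha>_def mult_ac)
      finally show "Z \<le> k n" by simp
    qed
  qed
  have lim: "(\<lambda>n. b ^ k n) \<longlonglongrightarrow> 0"
    using filterlim_compose[OF LIMSEQ_power_zero[of b] kfil] b0 b1 by simp
  have ev: "eventually (\<lambda>n. r n \<le> b ^ k n) sequentially"
    unfolding eventually_sequentially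
  proof (intro exI allI impI)
    fix n :: nat assume "1 \<le> n"
    then have n: "n > 0" by simp
    have cc: "card (configs D n) = fact (n*D)"
      unfolding configs_def by (rule card_permutations) simp_all
    have fpos: "(fact (n*D) :: real) > 0" by simp
    have "r n = real (card {\<sigma> \<in> configs D n. has_induced_matching D n \<sigma> (k n)}) / fact (n*D)"
      unfolding r_def cc by simp
    also have "\<dots> \<le> (real (n choose k n) ^ 2 * real (k n * D choose k n) * fact (n*D) * (1 - real (k n) / real n) ^ (k n * D - k n)) / fact (n*D)"
      by (rule divide_right_mono[OF bad_bound[OF Dp n, of "k n"]]) (use fpos in simp)
    also have "\<dots> = real (n choose k n) ^ 2 * real (k n * D choose k n) * (1 - real (k n) / real n) ^ (k n * D - k n)"
      using fpos by simp
    also have "\<dots> \<le> b ^ k n"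
      unfolding b_def \<alpha>_def by (rule analytic[OF assms n kge])
    finally show "r n \<le> b ^ k n" .
  qed
  have ev0: "eventually (\<lambda>n. 0 \<le> r n) sequentially" by (simp add: r_def)
  have "r \<longlonglongrightarrow> 0" by (rule tendsto_sandwich[OF ev0 ev tendsto_const lim])
  then show ?thesis unfolding r_def k_def .
qed

end
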